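(* Fix a real parameter $k$. Let $G$ be a topology that is strongly consistent (with respect to $k$) and physically connected. Then $G$ is strongly connected, i.e., for any two nodes $u,v$ of $G$ there is a directed path from $u$ to $v$ consisting only of active links.
   Context: A topology is a finite directed graph $G=(V,E)$ whose links $e\in E$ carry a real weight $w(e)$ and a state $s(e)\in\{\mathrm{active},\mathrm{inactive},\mathrm{unclassified}\}$; a link is classified if it is active or inactive. A path is a finite sequence of links in which the target of each link is the source of the next. $G$ is physically connected if between any two nodes there is a directed path of links in arbitrary state. $G$ is structurally consistent if it has no loops and no parallel links (two distinct links with the same source and target). For a link $ab$ from $a$ to $b$, a triangle for $ab$ is a node $c\notin\{a,b\}$ with classified links $ac$ and $cb$ such that $w(ab)>\max(w(ac),w(cb))$ and $w(ab)\ge k\cdot\min(w(ac),w(cb))$. Inactive-link constraint: every inactive link has a triangle. Active-link constraint: no active link has a triangle. Unclassified-link constraint: no link is unclassified. $G$ is weakly consistent if it is structurally consistent and fulfills the active-link and inactive-link constraints; it is strongly consistent if it is weakly consistent and additionally fulfills the unclassified-link constraint. *)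

theory Defs
  imports Main "HOL.Real"
begin

datatype link_state = Active | Inactive | Unclassified

record ('v, 'e) topology =
  nodes :: "'v set"
  links :: "'e set"
  src :: "'e \<Rightarrow> 'v"
  tgt :: "'e \<Rightarrow> 'v"
  weight :: "'e \<Rightarrow> real"
  state :: "'e \<Rightarrow> link_state"

definition finite_topology :: "('v, 'e) topology \<Rightarrow> bool" where
  "finite_topology G \<longleftrightarrow> finite (nodes G) \<and> finite (links G) \<and>
     (\<forall>e \<in> links G. src G e \<in> nodes G \<and> tgt G e \<in> nodes G)"

definition classified :: "('v, 'e) topology \<Rightarrow> 'e \<Rightarrow> bool" where
  "classified G e \<longleftrightarrow> state G e = Active \<or> state G e = Inactive"

definition is_path :: "('v, 'e) topology \<Rightarrow> 'e list \<Rightarrow> bool" where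
  "is_path G p \<longleftrightarrow> set p \<subseteq> links G \<and>
     (\<forall>i. Suc i < length p \<longrightarrow> tgt G (p ! i) = src G (p ! Suc i))"

definition path_from_to :: "('v, 'e) topology \<Rightarrow> 'v \<Rightarrow> 'v \<Rightarrow> 'e list \<Rightarrow> bool" where
  "path_from_to G u v p \<longleftrightarrow> is_path G p \<and>
     (if p = [] then u = v else src G (hd p) = u \<and> tgt G (last p) = v)"

definition physically_connected :: "('v, 'e) topology \<Rightarrow> bool" where
  "physically_connected G \<longleftrightarrow>
     (\<forall>u \<in> nodes G. \<forall>v \<in> nodes G. \<exists>p. path_from_to G u v p)"

definition structurally_consistent :: "('v, 'e) topology \<Rightarrow> bool" where
  "structurally_consistent G \<longleftrightarrow>
     (\<forall>e \<in> links G. src G e \<noteq> tgt G e) \<and>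
     (\<forall>e1 \<in> links G. \<forall>e2 \<in> links G. e1 \<noteq> e2 \<longrightarrow>
        \<not> (src G e1 = src G e2 \<and> tgt G e1 = tgt G e2))"

definition has_triangle :: "real \<Rightarrow> ('v, 'e) topology \<Rightarrow> 'e \<Rightarrow> bool" where
  "has_triangle k G e \<longleftrightarrow>
     (\<exists>c \<in> nodes G. c \<noteq> src G e \<and> c \<noteq> tgt G e \<and>
       (\<exists>e1 \<in> links G. \<exists>e2 \<in> links G.
          src G e1 = src G e \<and> tgt G e1 = c \<and> src G e2 = c \<and> tgt G e2 = tgt G e \<and>
          classified G e1 \<and> classified G e2 \<and>
          weight G e > max (weight G e1) (weight G e2) \<and>
          weight G e \<ge> k * min (weight G e1) (weight G e2)))"

definition inactive_link_constraint :: "real \<Rightarrow> ('v, 'e) topology \<Rightarrow> bool" where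
  "inactive_link_constraint k G \<longleftrightarrow>
     (\<forall>e \<in> links G. state G e = Inactive \<longrightarrow> has_triangle k G e)"

definition active_link_constraint :: "real \<Rightarrow> ('v, 'e) topology \<Rightarrow> bool" where
  "active_link_constraint k G \<longleftrightarrow>
     (\<forall>e \<in> links G. state G e = Active \<longrightarrow> \<not> has_triangle k G e)"

definition unclassified_link_constraint :: "('v, 'e) topology \<Rightarrow> bool" where
  "unclassified_link_constraint G \<longleftrightarrow> (\<forall>e \<in> links G. state G e \<noteq> Unclassified)"

definition weakly_consistent :: "real \<Rightarrow> ('v, 'e) topology \<Rightarrow> bool" where
  "weakly_consistent k G \<longleftrightarrow> structurally_consistent G \<and>
     active_link_constraint k G \<and> inactive_link_constraint k G"

definition strongly_consistent :: "real \<Rightarrow> ('v, 'e) topology \<Rightarrow> bool" where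
  "strongly_consistent k G \<longleftrightarrow> weakly_consistent k G \<and> unclassified_link_constraint G"

definition strongly_connected :: "('v, 'e) topology \<Rightarrow> bool" where
  "strongly_connected G \<longleftrightarrow>
     (\<forall>u \<in> nodes G. \<forall>v \<in> nodes G. \<exists>p. path_from_to G u v p \<and>
        (\<forall>e \<in> set p. state G e = Active))"

end

theory Submission
  imports Defs
begin

lemma path_append:
  assumes "path_from_to G u v p" "path_from_to G v w q"
  shows "path_from_to G u w (p @ q)"
proof (cases "p = []")
  case True thus ?thesis using assms by (simp add: path_from_to_def)
next
  case pne: False
  show ?thesis
  proof (cases "q = []")
    case True thus ?thesis using assms pne by (simp add: path_from_to_def)
  next
    case qne: False
    have pp: "is_path G p" and qp: "is_path G q" and hp: "src G (hd p) = u"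
      and lp: "tgt G (last p) = v" and hq: "src G (hd q) = v" and lq: "tgt G (last q) = w"
      using assms pne qne by (auto simp: path_from_to_def)
    have "is_path G (p @ q)"
      unfolding is_path_def
    proof (intro conjI allI impI)
      show "set (p @ q) \<subseteq> links G" using pp qp by (auto simp: is_path_def)
    next
      fix i assume i: "Suc i < length (p @ q)"
      consider "Suc i < length p" | "Suc i = length p" | "length p \<le> i" by linarith
      then show "tgt G ((p @ q) ! i) = src G ((p @ q) ! Suc i)"
      proof cases
        case 1 thus ?thesis using pp by (simp add: is_path_def nth_append)
      next
        case 2
        have "i = length p - 1" using 2 by simp
        hence "p ! i = last p" using pne by (simp add: last_conv_nth)
        moreover have "q ! 0 = hd q" using qne by (simp add: hd_conv_nth)
        ultimately show ?thesis using 2 lp hq by (simp add: nth_append)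
      next
        case 3
        have "Suc (i - length p) < length q" using i 3 by simp
        hence "tgt G (q ! (i - length p)) = src G (q ! Suc (i - length p))"
          using qp by (simp add: is_path_def)
        moreover have "Suc i - length p = Suc (i - length p)" using 3 by simp
        ultimately show ?thesis using 3 by (simp add: nth_append)
      qed
    qed
    thus ?thesis using pne qne hp lq by (simp add: path_from_to_def)
  qed
qed

definition areach :: "('v, 'e) topology \<Rightarrow> 'v \<Rightarrow> 'v \<Rightarrow> bool" where
  "areach G u v \<longleftrightarrow> (\<exists>p. path_from_to G u v p \<and> (\<forall>e \<in> set p. state G e = Active))"

lemma areach_refl: "areach G u u"
  unfolding areach_def by (rule exI[of _ "[]"]) (simp add: path_from_to_def is_path_def)

lemma areach_trans: "areach G u v \<Longrightarrow> areach G v w \<Longrightarrow> areach G u w"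
  unfolding areach_def using path_append by fastforce

lemma areach_link: "e \<in> links G \<Longrightarrow> state G e = Active \<Longrightarrow> areach G (src G e) (tgt G e)"
  unfolding areach_def by (rule exI[of _ "[e]"]) (simp add: path_from_to_def is_path_def)

lemma link_areach:
  assumes fin: "finite (links G)" and sc: "strongly_consistent k G"
  shows "e \<in> links G \<Longrightarrow> areach G (src G e) (tgt G e)"
proof (induction "card {e' \<in> links G. weight G e' < weight G e}" arbitrary: e rule: less_induct)
  case less
  have cl: "state G e = Active \<or> state G e = Inactive"
    using sc less.prems by (cases "state G e")
      (auto simp: strongly_consistent_def unclassified_link_constraint_def)
  show ?case
  proof (cases "state G e = Active")
    case True show ?thesis by (rule areach_link[OF less.prems True])
  next
    case False
    hence "state G e = Inactive" using cl by simp
    hence "has_triangle k G e" using sc less.prems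
      by (auto simp: strongly_consistent_def weakly_consistent_def inactive_link_constraint_def)
    then obtain c e1 e2 where e1: "e1 \<in> links G" and e2: "e2 \<in> links G"
      and s1: "src G e1 = src G e" and t1: "tgt G e1 = c" and s2: "src G e2 = c"
      and t2: "tgt G e2 = tgt G e" and w1: "weight G e1 < weight G e"
      and w2: "weight G e2 < weight G e"
      unfolding has_triangle_def by auto
    have sub: "{e' \<in> links G. weight G e' < weight G ei} \<subset> {e' \<in> links G. weight G e' < weight G e}"
      if "ei \<in> links G" "weight G ei < weight G e" for ei
      using that by auto
    have c: "card {e' \<in> links G. weight G e' < weight G ei} < card {e' \<in> links G. weight G e' < weight G e}"
      if "ei \<in> links G" "weight G ei < weight G e" for ei
      using psubset_card_mono[OF _ sub[OF that]] fin by auto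
    have "areach G (src G e1) (tgt G e1)" using less.hyps[OF c[OF e1 w1] e1] .
    moreover have "areach G (src G e2) (tgt G e2)" using less.hyps[OF c[OF e2 w2] e2] .
    ultimately show ?thesis using s1 t1 s2 t2 areach_trans by metis
  qed
qed

lemma path_areach:
  assumes fin: "finite (links G)" and sc: "strongly_consistent k G"
  shows "path_from_to G u v p \<Longrightarrow> areach G u v"
proof (induction p arbitrary: u)
  case Nil thus ?case by (simp add: path_from_to_def areach_refl)
next
  case (Cons e p)
  have el: "e \<in> links G" and su: "src G e = u"
    using Cons.prems by (auto simp: path_from_to_def is_path_def)
  have pt: "path_from_to G (tgt G e) v p"
  proof (cases "p = []")
    case True thus ?thesis using Cons.prems by (simp add: path_from_to_def is_path_def)
  next
    case False
    have ip: "is_path G (e # p)" using Cons.prems by (simp add: path_from_to_def)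
    have "is_path G p" using ip unfolding is_path_def
    proof (intro conjI allI impI)
      fix i assume "set (e # p) \<subseteq> links G \<and> (\<forall>i. Suc i < length (e # p) \<longrightarrow> tgt G ((e # p) ! i) = src G ((e # p) ! Suc i))"
        and "Suc i < length p"
      thus "tgt G (p ! i) = src G (p ! Suc i)" by (metis Suc_less_eq length_Cons nth_Cons_Suc)
    qed auto
    moreover have "tgt G e = src G (hd p)"
      using ip False unfolding is_path_def by (auto simp: hd_conv_nth)
    ultimately show ?thesis using Cons.prems False by (simp add: path_from_to_def)
  qed
  show ?case using areach_trans[OF link_areach[OF fin sc el] Cons.IH[OF pt]] su by simp
qed

theorem theorem2:
  fixes k :: real and G :: "('v, 'e) topology"
  assumes "finite_topology G"
    and "strongly_consistent k G"
    and "physically_connected G"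
  shows "strongly_connected G"
  using assms path_areach[of G k]
  unfolding strongly_connected_def physically_connected_def finite_topology_def areach_def[symmetric]
  by blast

end
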